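(* Let $S$ be a $1$-synchronizable system. Let $\tau\in T_0(S)$ and $a_1,\dots,a_n,b_1,\dots,b_m\in\Sigma_M$ be such that $\tau\cdot !?a_1\cdots !?a_n\in T_0(S)$, $\tau\cdot !?b_1\cdots !?b_m\in T_0(S)$, and $\mathrm{src}(a_i)\neq\mathrm{src}(b_j)$ for all $i\in\{1,\dots,n\}$, $j\in\{1,\dots,m\}$. Then for every shuffle $c_1\cdots c_{n+m}$ of the word $a_1\cdots a_n$ with the word $b_1\cdots b_m$: $\tau\cdot !?c_1\cdots !?c_{n+m}\in T_0(S)$, and $\tau\cdot !?a_1\cdots !?a_n\cdot !?b_1\cdots !?b_m\equiv_S\tau\cdot !?c_1\cdots !?c_{n+m}$.
   Context: A message set $M=(\Sigma_M,N,\mathrm{src},\mathrm{dst})$: finite set of messages, $N\ge1$ peers, $\mathrm{src}(a)\neq\mathrm{dst}(a)\in\{1,\dots,N\}$. Actions $!a$ (by peer $\mathrm{src}(a)$), $?a$ (by peer $\mathrm{dst}(a)$); traces are finite action sequences; $!?a$ abbreviates $!a\cdot?a$. For a trace $\tau$, $\pi_!(\tau)$ is the sequence of sent messages; $\mathrm{buf}_{i\to j}(\tau)$ is the word $w$ (if any) with (sent on $i\to j$) $=$ (received on $i\to j$)$\cdot w$. $\tau$ is FIFO ($k$-bounded FIFO) if for all $i,j$ and prefixes $\tau'$, $\mathrm{buf}_{i\to j}(\tau')$ is defined (and has length $\le k$); synchronous if of the form $!?a_1\cdots!?a_k$. A system $S=(P_1,\dots,P_N)$: finite automata $P_i$ (all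 states accepting) over actions of peer $i$, with one FIFO channel per ordered pair $i\neq j$. A configuration: one control state per peer and contents $w_{i,j}$ of channels; stable if all channels empty. $!a$ ($\mathrm{src}(a)=i,\mathrm{dst}(a)=j$) moves $P_i$ and appends $a$ to $w_{i,j}$; $?a$ moves $P_j$ and removes $a$ from the head of $w_{i,j}$; $c_0$ is the initial configuration. $T_k(S)$ ($k\ge1$): $k$-bounded FIFO traces $\tau$ with $c_0\xrightarrow{\tau}c$ for some $c$; $T_0(S)$: synchronous such traces; $T_\omega(S)=\bigcup_kT_k(S)$. $\tau_1\equiv_S\tau_2$ iff $\tau_1,\tau_2\in T_\omega(S)$ and there is $c$ with $c_0\xrightarrow{\tau_1}c$ and $c_0\xrightarrow{\tau_2}c$. $ST_k(S)=\{\pi_!(\tau)\mid\tau\in T_k(S)\}\cup\{(\pi_!(\tau),c)\mid c_0\xrightarrow{\tau}c,\ c\text{ stable},\ \tau\in T_k(S)\}$; $S$ is $1$-synchronizable if $ST_0(S)=ST_1(S)$. *)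

theory Defs
  imports Main
begin

record 'm msgset =
  msgs :: "'m set"
  npeers :: nat
  src :: "'m \<Rightarrow> nat"
  dst :: "'m \<Rightarrow> nat"

definition wf_msgset :: "'m msgset \<Rightarrow> bool" where
  "wf_msgset M \<longleftrightarrow> finite (msgs M) \<and> npeers M \<ge> 1 \<and>
     (\<forall>a\<in>msgs M. src M a \<noteq> dst M a \<and> src M a \<in> {1..npeers M} \<and> dst M a \<in> {1..npeers M})"

datatype 'm action = Send 'm | Recv 'm

fun amsg :: "'m action \<Rightarrow> 'm" where
  "amsg (Send a) = a" | "amsg (Recv a) = a"

fun actor :: "'m msgset \<Rightarrow> 'm action \<Rightarrow> nat" where
  "actor M (Send a) = src M a" | "actor M (Recv a) = dst M a"

text \<open>A finite automaton (all states accepting).\<close>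
record ('m, 's) peer =
  states :: "'s set"
  init :: 's
  trans :: "('s \<times> 'm action \<times> 's) set"

definition wf_peer :: "'m msgset \<Rightarrow> nat \<Rightarrow> ('m, 's) peer \<Rightarrow> bool" where
  "wf_peer M i P \<longleftrightarrow> finite (states P) \<and> init P \<in> states P \<and> finite (trans P) \<and>
     (\<forall>(q, \<alpha>, q') \<in> trans P. q \<in> states P \<and> q' \<in> states P \<and>
        amsg \<alpha> \<in> msgs M \<and> actor M \<alpha> = i)"

type_synonym ('m, 's) system = "nat \<Rightarrow> ('m, 's) peer"

definition wf_system :: "'m msgset \<Rightarrow> ('m, 's) system \<Rightarrow> bool" where
  "wf_system M S \<longleftrightarrow> (\<forall>i\<in>{1..npeers M}. wf_peer M i (S i))"

text \<open>Control state per peer, and contents of the FIFO channel (i,j) for each ordered pair.\<close>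
type_synonym ('s, 'm) config = "(nat \<Rightarrow> 's) \<times> (nat \<times> nat \<Rightarrow> 'm list)"

inductive step :: "'m msgset \<Rightarrow> ('m, 's) system \<Rightarrow> ('s, 'm) config \<Rightarrow> 'm action \<Rightarrow> ('s, 'm) config \<Rightarrow> bool"
  for M S where
  send: "i = src M a \<Longrightarrow> (q i, Send a, q') \<in> trans (S i) \<Longrightarrow>
     step M S (q, w) (Send a) (q(i := q'), w((i, dst M a) := w (i, dst M a) @ [a]))"
| recv: "j = dst M a \<Longrightarrow> (q j, Recv a, q') \<in> trans (S j) \<Longrightarrow> w (src M a, j) = a # u \<Longrightarrow>
     step M S (q, w) (Recv a) (q(j := q'), w((src M a, j) := u))"

fun run :: "'m msgset \<Rightarrow> ('m, 's) system \<Rightarrow> ('s, 'm) config \<Rightarrow> 'm action list \<Rightarrow> ('s, 'm) config \<Rightarrow> bool" where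
  "run M S c [] c' \<longleftrightarrow> c = c'"
| "run M S c (\<alpha> # \<tau>) c' \<longleftrightarrow> (\<exists>c''. step M S c \<alpha> c'' \<and> run M S c'' \<tau> c')"

definition c0 :: "('m, 's) system \<Rightarrow> ('s, 'm) config" where
  "c0 S = ((\<lambda>i. init (S i)), (\<lambda>_. []))"

definition stable :: "('s, 'm) config \<Rightarrow> bool" where
  "stable c \<longleftrightarrow> (\<forall>p. snd c p = [])"

fun sends :: "'m action list \<Rightarrow> 'm list" where
  "sends [] = []"
| "sends (Send a # \<tau>) = a # sends \<tau>"
| "sends (Recv a # \<tau>) = sends \<tau>"

fun recvs :: "'m action list \<Rightarrow> 'm list" where
  "recvs [] = []"
| "recvs (Recv a # \<tau>) = a # recvs \<tau>"
| "recvs (Send a # \<tau>) = recvs \<tau>"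

definition on_chan :: "'m msgset \<Rightarrow> nat \<Rightarrow> nat \<Rightarrow> 'm list \<Rightarrow> 'm list" where
  "on_chan M i j xs = filter (\<lambda>a. src M a = i \<and> dst M a = j) xs"

definition is_buf :: "'m msgset \<Rightarrow> nat \<Rightarrow> nat \<Rightarrow> 'm action list \<Rightarrow> 'm list \<Rightarrow> bool" where
  "is_buf M i j \<tau> w \<longleftrightarrow> on_chan M i j (sends \<tau>) = on_chan M i j (recvs \<tau>) @ w"

definition kfifo :: "'m msgset \<Rightarrow> nat \<Rightarrow> 'm action list \<Rightarrow> bool" where
  "kfifo M k \<tau> \<longleftrightarrow> (\<forall>n\<le>length \<tau>. \<forall>i j. \<exists>w. is_buf M i j (take n \<tau>) w \<and> length w \<le> k)"

text \<open>!?a abbreviation: syncw [a1,...,ak] = !?a1 ... !?ak\<close>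
definition syncw :: "'m list \<Rightarrow> 'm action list" where
  "syncw as = concat (map (\<lambda>a. [Send a, Recv a]) as)"

definition synchronous :: "'m action list \<Rightarrow> bool" where
  "synchronous \<tau> \<longleftrightarrow> (\<exists>as. \<tau> = syncw as)"

definition T :: "'m msgset \<Rightarrow> ('m, 's) system \<Rightarrow> nat \<Rightarrow> 'm action list set" where
  "T M S k = {\<tau>. (if k = 0 then synchronous \<tau> else kfifo M k \<tau>) \<and> (\<exists>c. run M S (c0 S) \<tau> c)}"

definition Tomega :: "'m msgset \<Rightarrow> ('m, 's) system \<Rightarrow> 'm action list set" where
  "Tomega M S = (\<Union>k. T M S k)"

definition sequiv :: "'m msgset \<Rightarrow> ('m, 's) system \<Rightarrow> 'm action list \<Rightarrow> 'm action list \<Rightarrow> bool" where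
  "sequiv M S \<tau>1 \<tau>2 \<longleftrightarrow> \<tau>1 \<in> Tomega M S \<and> \<tau>2 \<in> Tomega M S \<and>
     (\<exists>c. run M S (c0 S) \<tau>1 c \<and> run M S (c0 S) \<tau>2 c)"

definition ST :: "'m msgset \<Rightarrow> ('m, 's) system \<Rightarrow> nat \<Rightarrow> ('m list + ('m list \<times> ('s, 'm) config)) set" where
  "ST M S k = Inl ` (sends ` T M S k) \<union>
     {Inr (sends \<tau>, c) | \<tau> c. run M S (c0 S) \<tau> c \<and> stable c \<and> \<tau> \<in> T M S k}"

definition one_synchronizable :: "'m msgset \<Rightarrow> ('m, 's) system \<Rightarrow> bool" where
  "one_synchronizable M S \<longleftrightarrow> ST M S 0 = ST M S 1"

end

theory Submission
  imports Defs
begin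

fun lp :: "('m, 's) peer \<Rightarrow> 's \<Rightarrow> 'm action list \<Rightarrow> 's \<Rightarrow> bool" where
  "lp P s [] s' \<longleftrightarrow> s = s'"
| "lp P s (\<alpha> # w) s' \<longleftrightarrow> (\<exists>s''. (s, \<alpha>, s'') \<in> trans P \<and> lp P s'' w s')"

lemma lp_append: "lp P s (xs @ ys) s' \<longleftrightarrow> (\<exists>s''. lp P s xs s'' \<and> lp P s'' ys s')"
  by (induction xs arbitrary: s) auto

lemma lp_prefix: "lp P s (xs @ ys) s' \<Longrightarrow> \<exists>s''. lp P s xs s''"
  by (auto simp: lp_append)

definition prj :: "'m msgset \<Rightarrow> nat \<Rightarrow> 'm action list \<Rightarrow> 'm action list" where
  "prj M i \<rho> = filter (\<lambda>\<alpha>. actor M \<alpha> = i) \<rho>"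

lemma prj_append[simp]: "prj M i (xs @ ys) = prj M i xs @ prj M i ys"
  by (simp add: prj_def)

lemma prj_Cons[simp]: "prj M i (\<alpha> # xs) = (if actor M \<alpha> = i then \<alpha> # prj M i xs else prj M i xs)"
  by (simp add: prj_def)

lemma prj_Nil[simp]: "prj M i [] = []"
  by (simp add: prj_def)

definition bnd :: "(nat \<times> nat \<Rightarrow> 'm list) \<Rightarrow> bool" where
  "bnd W \<longleftrightarrow> (\<forall>p. length (W p) \<le> 1)"

fun chstep :: "'m msgset \<Rightarrow> (nat \<times> nat \<Rightarrow> 'm list) \<Rightarrow> 'm action \<Rightarrow> (nat \<times> nat \<Rightarrow> 'm list) option" where
  "chstep M W (Send a) = Some (W((src M a, dst M a) := W (src M a, dst M a) @ [a]))"
| "chstep M W (Recv a) = (case W (src M a, dst M a) of [] \<Rightarrow> None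
      | b # u \<Rightarrow> if b = a then Some (W((src M a, dst M a) := u)) else None)"

fun bch :: "'m msgset \<Rightarrow> (nat \<times> nat \<Rightarrow> 'm list) \<Rightarrow> 'm action list \<Rightarrow> (nat \<times> nat \<Rightarrow> 'm list) option" where
  "bch M W [] = Some W"
| "bch M W (\<alpha> # \<rho>) = (case chstep M W \<alpha> of None \<Rightarrow> None
      | Some W' \<Rightarrow> if bnd W' then bch M W' \<rho> else None)"

lemma bch_append: "bch M W (xs @ ys) = (case bch M W xs of None \<Rightarrow> None | Some W' \<Rightarrow> bch M W' ys)"
  by (induction xs arbitrary: W) (auto split: option.splits)

lemma bch_bnd: "bch M W \<rho> = Some W' \<Longrightarrow> bnd W \<Longrightarrow> bnd W'"
  by (induction \<rho> arbitrary: W) (auto split: option.splits if_splits)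

lemma bch_take: "bch M W \<rho> = Some W' \<Longrightarrow> \<exists>W''. bch M W (take n \<rho>) = Some W''"
proof -
  assume h: "bch M W \<rho> = Some W'"
  have "bch M W (take n \<rho> @ drop n \<rho>) = Some W'" using h by simp
  thus ?thesis unfolding bch_append by (cases "bch M W (take n \<rho>)") auto
qed

lemma sends_append[simp]: "sends (xs @ ys) = sends xs @ sends ys"
  by (induction xs rule: sends.induct) auto

lemma recvs_append[simp]: "recvs (xs @ ys) = recvs xs @ recvs ys"
  by (induction xs rule: recvs.induct) auto

lemma bch_buf: "bch M (\<lambda>_. []) \<rho> = Some W \<Longrightarrow>
   (\<forall>i j. is_buf M i j \<rho> (W (i, j))) \<and> (\<forall>i j x. x \<in> set (W (i, j)) \<longrightarrow> src M x = i \<and> dst M x = j)"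
proof (induction \<rho> arbitrary: W rule: rev_induct)
  case Nil
  hence "W = (\<lambda>_. [])" by simp
  thus ?case by (simp add: is_buf_def on_chan_def)
next
  case (snoc \<alpha> \<rho>)
  from snoc.prems have "(case bch M (\<lambda>_. []) \<rho> of None \<Rightarrow> None | Some W' \<Rightarrow> bch M W' [\<alpha>]) = Some W"
    by (simp only: bch_append)
  then obtain W0 where b0: "bch M (\<lambda>_. []) \<rho> = Some W0"
    and b1: "bch M W0 [\<alpha>] = Some W"
    by (cases "bch M (\<lambda>_. []) \<rho>") auto
  from snoc.IH[OF b0] have ih1: "\<And>i j. is_buf M i j \<rho> (W0 (i, j))"
    and ih2: "\<And>i j x. x \<in> set (W0 (i, j)) \<Longrightarrow> src M x = i \<and> dst M x = j" by auto
  show ?case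
  proof (cases \<alpha>)
    case (Send a)
    with b1 have W: "W = W0((src M a, dst M a) := W0 (src M a, dst M a) @ [a])"
      by (simp split: if_splits)
    have A: "\<forall>i j. is_buf M i j (\<rho> @ [\<alpha>]) (W (i, j))"
    proof (intro allI)
      fix i j
      show "is_buf M i j (\<rho> @ [\<alpha>]) (W (i, j))"
        using ih1[of i j] unfolding W Send is_buf_def on_chan_def by auto
    qed
    have B: "\<forall>i j x. x \<in> set (W (i, j)) \<longrightarrow> src M x = i \<and> dst M x = j"
      using ih2 unfolding W by (auto split: if_splits)
    show ?thesis using A B by blast
  next
    case (Recv a)
    with b1 obtain u where u: "W0 (src M a, dst M a) = a # u" and W: "W = W0((src M a, dst M a) := u)"
      by (simp split: if_splits list.splits)
    have A: "\<forall>i j. is_buf M i j (\<rho> @ [\<alpha>]) (W (i, j))"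
    proof (intro allI)
      fix i j
      show "is_buf M i j (\<rho> @ [\<alpha>]) (W (i, j))"
      proof (cases "i = src M a \<and> j = dst M a")
        case True
        thus ?thesis using ih1[of i j] u unfolding W Recv is_buf_def on_chan_def by auto
      next
        case False
        thus ?thesis using ih1[of i j] unfolding W Recv is_buf_def on_chan_def by auto
      qed
    qed
    have B: "\<forall>i j x. x \<in> set (W (i, j)) \<longrightarrow> src M x = i \<and> dst M x = j"
      using ih2 u unfolding W by (auto split: if_splits) (metis list.set_intros(2))+
    show ?thesis using A B by blast
  qed
qed

lemma bch_kfifo: "bch M (\<lambda>_. []) \<rho> = Some W \<Longrightarrow> kfifo M 1 \<rho>"
  unfolding kfifo_def
proof (intro allI impI)
  fix n i j assume h: "bch M (\<lambda>_. []) \<rho> = Some W"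
  then obtain W'' where b: "bch M (\<lambda>_. []) (take n \<rho>) = Some W''" using bch_take by blast
  have "bnd W''" using bch_bnd[OF b] by (simp add: bnd_def)
  hence "length (W'' (i, j)) \<le> 1" by (simp add: bnd_def)
  with bch_buf[OF b] show "\<exists>w. is_buf M i j (take n \<rho>) w \<and> length w \<le> 1"
    by blast
qed

lemma run_lp: "run M S c \<rho> c' \<Longrightarrow> lp (S k) (fst c k) (prj M k \<rho>) (fst c' k)"
proof (induction \<rho> arbitrary: c)
  case Nil thus ?case by simp
next
  case (Cons \<alpha> \<rho>)
  then obtain c'' where st: "step M S c \<alpha> c''" and r: "run M S c'' \<rho> c'" by auto
  from Cons.IH[OF r] have ih: "lp (S k) (fst c'' k) (prj M k \<rho>) (fst c' k)" .
  from st show ?case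
  proof cases
    case (send i a q q' w)
    thus ?thesis using ih by auto
  next
    case (recv j a q q' w u)
    thus ?thesis using ih by auto
  qed
qed

lemma step_chan: "step M S c \<alpha> c' \<Longrightarrow> chstep M (snd c) \<alpha> = Some (snd c')"
  by (erule step.cases) auto

lemma lp_run: "(\<forall>k. lp (S k) (q k) (prj M k \<rho>) (q' k)) \<Longrightarrow> bch M W \<rho> = Some W' \<Longrightarrow> run M S (q, W) \<rho> (q', W')"
proof (induction \<rho> arbitrary: q W)
  case Nil
  hence "q = q'" by auto
  thus ?case using Nil by simp
next
  case (Cons \<alpha> \<rho>)
  obtain W1 where ch: "chstep M W \<alpha> = Some W1" and b: "bch M W1 \<rho> = Some W'"
    using Cons.prems(2) by (auto split: option.splits if_splits)
  define k0 where "k0 = actor M \<alpha>"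
  from Cons.prems(1) have "lp (S k0) (q k0) (prj M k0 (\<alpha> # \<rho>)) (q' k0)" by blast
  then obtain s where t: "(q k0, \<alpha>, s) \<in> trans (S k0)" and l: "lp (S k0) s (prj M k0 \<rho>) (q' k0)"
    by (auto simp: k0_def)
  have "\<forall>k. lp (S k) ((q(k0 := s)) k) (prj M k \<rho>) (q' k)"
  proof
    fix k show "lp (S k) ((q(k0 := s)) k) (prj M k \<rho>) (q' k)"
    proof (cases "k = k0")
      case True thus ?thesis using l by simp
    next
      case False
      with Cons.prems(1) have "lp (S k) (q k) (prj M k (\<alpha> # \<rho>)) (q' k)" by blast
      thus ?thesis using False by (simp add: k0_def)
    qed
  qed
  from Cons.IH[OF this b] have r: "run M S (q(k0:=s), W1) \<rho> (q', W')" .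
  have "step M S (q, W) \<alpha> (q(k0:=s), W1)"
  proof (cases \<alpha>)
    case (Send a)
    with ch have "W1 = W((src M a, dst M a) := W (src M a, dst M a) @ [a])" by simp
    thus ?thesis using t Send k0_def by (auto intro: step.send)
  next
    case (Recv a)
    with ch obtain u where u: "W (src M a, dst M a) = a # u" and "W1 = W((src M a, dst M a) := u)"
      by (auto split: list.splits if_splits)
    thus ?thesis using t Recv k0_def by (auto intro: step.recv)
  qed
  with r show ?case by auto
qed

lemma syncw_Nil[simp]: "syncw [] = []"
  by (simp add: syncw_def)
lemma syncw_Cons[simp]: "syncw (x # xs) = Send x # Recv x # syncw xs"
  by (simp add: syncw_def)
lemma syncw_append[simp]: "syncw (xs @ ys) = syncw xs @ syncw ys"
  by (simp add: syncw_def)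
lemma sends_syncw[simp]: "sends (syncw xs) = xs"
  by (induction xs) auto

lemma bnd_upd: "bnd W \<Longrightarrow> length v \<le> 1 \<Longrightarrow> bnd (W(p := v))"
  by (simp add: bnd_def)

lemma bch_syncw: "bnd W \<Longrightarrow> (\<forall>y\<in>set ys. W (src M y, dst M y) = []) \<Longrightarrow> bch M W (syncw ys) = Some W"
proof (induction ys)
  case Nil thus ?case by simp
next
  case (Cons y ys)
  have e: "W (src M y, dst M y) = []" using Cons.prems by simp
  have b1: "bnd (W((src M y, dst M y) := [y]))" using Cons.prems(1) by (rule bnd_upd) simp
  have "W((src M y, dst M y) := [y], (src M y, dst M y) := []) = W"
    using e by (simp add: fun_eq_iff)
  thus ?case using Cons e b1 by simp
qed

lemma run_sync_chan: "run M S c (syncw X) c' \<Longrightarrow> snd c = (\<lambda>_. []) \<Longrightarrow> snd c' = (\<lambda>_. [])"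
proof (induction X arbitrary: c)
  case Nil thus ?case by simp
next
  case (Cons x X)
  from Cons.prems(1) obtain c1 c2 where s1: "step M S c (Send x) c1" and s2: "step M S c1 (Recv x) c2"
    and r: "run M S c2 (syncw X) c'" by auto
  from step_chan[OF s1] Cons.prems(2) have "snd c1 = (\<lambda>_. [])((src M x, dst M x) := [x])" by simp
  with step_chan[OF s2] have "snd c2 = (\<lambda>_. [])" by (auto simp: fun_eq_iff)
  from Cons.IH[OF r this] show ?case .
qed

definition Rs :: "'m msgset \<Rightarrow> ('m, 's) system \<Rightarrow> nat \<Rightarrow> 'm list \<Rightarrow> 's set" where
  "Rs M S k X = {s. lp (S k) (init (S k)) (prj M k (syncw X)) s}"

definition V :: "'m msgset \<Rightarrow> ('m, 's) system \<Rightarrow> 'm list \<Rightarrow> bool" where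
  "V M S X \<longleftrightarrow> (\<forall>k. Rs M S k X \<noteq> {})"

lemma reach_syncw: "run M S (c0 S) (syncw X) c \<longleftrightarrow> snd c = (\<lambda>_. []) \<and> (\<forall>k. fst c k \<in> Rs M S k X)"
proof
  assume r: "run M S (c0 S) (syncw X) c"
  have "snd c = (\<lambda>_. [])" using run_sync_chan[OF r] by (simp add: c0_def)
  moreover have "\<forall>k. fst c k \<in> Rs M S k X"
    using run_lp[OF r] by (simp add: Rs_def c0_def)
  ultimately show "snd c = (\<lambda>_. []) \<and> (\<forall>k. fst c k \<in> Rs M S k X)" by blast
next
  assume h: "snd c = (\<lambda>_. []) \<and> (\<forall>k. fst c k \<in> Rs M S k X)"
  have b: "bch M (\<lambda>_. []) (syncw X) = Some (\<lambda>_. [])"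
    by (rule bch_syncw) (auto simp: bnd_def)
  have "run M S ((\<lambda>i. init (S i)), (\<lambda>_. [])) (syncw X) (fst c, (\<lambda>_. []))"
    by (rule lp_run[OF _ b]) (use h in \<open>auto simp: Rs_def\<close>)
  moreover have "c = (fst c, (\<lambda>_. []))" using h by (simp add: prod_eq_iff)
  ultimately show "run M S (c0 S) (syncw X) c" by (simp add: c0_def)
qed

lemma T0_syncw: "syncw X \<in> T M S 0 \<longleftrightarrow> V M S X"
proof
  assume "syncw X \<in> T M S 0"
  then obtain c where "run M S (c0 S) (syncw X) c" by (auto simp: T_def)
  thus "V M S X" by (auto simp: reach_syncw V_def)
next
  assume v: "V M S X"
  define q where "q = (\<lambda>k. SOME s. s \<in> Rs M S k X)"
  have "\<forall>k. q k \<in> Rs M S k X"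
  proof
    fix k
    from v obtain s where "s \<in> Rs M S k X" unfolding V_def by blast
    thus "q k \<in> Rs M S k X" unfolding q_def by (rule someI)
  qed
  hence "run M S (c0 S) (syncw X) (q, (\<lambda>_. []))" by (simp add: reach_syncw)
  thus "syncw X \<in> T M S 0" by (auto simp: T_def synchronous_def)
qed

lemma T0_form: "\<tau> \<in> T M S 0 \<Longrightarrow> \<tau> = syncw (sends \<tau>)"
  by (auto simp: T_def synchronous_def)

lemma inl_tool:
  assumes os: "one_synchronizable M S" and b: "bch M (\<lambda>_. []) \<rho> = Some W"
    and l: "\<forall>k. \<exists>s. lp (S k) (init (S k)) (prj M k \<rho>) s"
  shows "V M S (sends \<rho>)"
proof -
  define q where "q = (\<lambda>k. SOME s. lp (S k) (init (S k)) (prj M k \<rho>) s)"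
  have "\<forall>k. lp (S k) (init (S k)) (prj M k \<rho>) (q k)"
    using l unfolding q_def by (auto intro: someI_ex)
  hence r: "run M S (c0 S) \<rho> (q, W)" unfolding c0_def by (rule lp_run[OF _ b])
  have "\<rho> \<in> T M S 1" using bch_kfifo[OF b] r by (auto simp: T_def)
  hence "Inl (sends \<rho>) \<in> ST M S 1" by (auto simp: ST_def)
  hence "Inl (sends \<rho>) \<in> ST M S 0" using os by (simp add: one_synchronizable_def)
  then obtain \<tau>' where t: "\<tau>' \<in> T M S 0" and e: "sends \<tau>' = sends \<rho>" by (auto simp: ST_def)
  from T0_form[OF t] e have "\<tau>' = syncw (sends \<rho>)" by simp
  with t show ?thesis by (simp add: T0_syncw)
qed

lemma inr_tool:
  assumes os: "one_synchronizable M S" and b: "bch M (\<lambda>_. []) \<rho> = Some (\<lambda>_. [])"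
    and l: "\<forall>k. \<exists>s. lp (S k) (init (S k)) (prj M k \<rho>) s"
    and l0: "lp (S i) (init (S i)) (prj M i \<rho>) s0"
  shows "s0 \<in> Rs M S i (sends \<rho>)"
proof -
  define q where "q = (\<lambda>k. if k = i then s0 else SOME s. lp (S k) (init (S k)) (prj M k \<rho>) s)"
  have "\<forall>k. lp (S k) (init (S k)) (prj M k \<rho>) (q k)"
    using l l0 unfolding q_def by (auto intro: someI_ex)
  hence r: "run M S (c0 S) \<rho> (q, (\<lambda>_. []))" unfolding c0_def by (rule lp_run[OF _ b])
  have "\<rho> \<in> T M S 1" using bch_kfifo[OF b] r by (auto simp: T_def)
  hence "Inr (sends \<rho>, (q, (\<lambda>_. []))) \<in> ST M S 1" using r by (auto simp: ST_def stable_def)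
  hence "Inr (sends \<rho>, (q, (\<lambda>_. []))) \<in> ST M S 0" using os by (simp add: one_synchronizable_def)
  then obtain \<tau>' where t: "\<tau>' \<in> T M S 0" and e: "sends \<tau>' = sends \<rho>"
    and r': "run M S (c0 S) \<tau>' (q, (\<lambda>_. []))" by (auto simp: ST_def)
  from T0_form[OF t] e have "\<tau>' = syncw (sends \<rho>)" by simp
  with r' have "\<forall>k. q k \<in> Rs M S k (sends \<rho>)" by (simp add: reach_syncw)
  thus ?thesis unfolding q_def by (metis)
qed

lemma V_prefix: "V M S (X @ Y) \<Longrightarrow> V M S X"
  unfolding V_def Rs_def by (auto simp: lp_append)

lemma E_lemma:
  assumes os: "one_synchronizable M S" and vx: "V M S (t @ [x])" and vy: "V M S (t @ ys)"
    and sd: "\<forall>y\<in>set ys. src M y \<noteq> src M x" and xd: "src M x \<noteq> dst M x"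
  shows "V M S (t @ x # ys)"
proof -
  have "\<forall>n. n \<le> length ys \<longrightarrow> V M S (t @ x # take n ys)"
  proof (intro allI)
    fix n show "n \<le> length ys \<longrightarrow> V M S (t @ x # take n ys)"
    proof (induction n)
      case 0 thus ?case using vx by simp
    next
      case (Suc n)
      show ?case
      proof
        assume sl: "Suc n \<le> length ys"
        hence ih: "V M S (t @ x # take n ys)" using Suc.IH by simp
        define y where "y = ys ! n"
        have tk: "take (Suc n) ys = take n ys @ [y]" using sl by (simp add: y_def take_Suc_conv_app_nth)
        have yx: "src M y \<noteq> src M x" using sd sl by (simp add: y_def)
        define \<rho> where "\<rho> = syncw t @ Send x # syncw (take n ys) @ [Send y]"
        have sends: "sends \<rho> = t @ x # take (Suc n) ys" using tk by (simp add: \<rho>_def)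
        define W1 where "W1 = (\<lambda>_. [])((src M x, dst M x) := [x])"
        have bW1: "bnd W1" by (simp add: bnd_def W1_def)
        have b1: "bch M (\<lambda>_. []) (syncw t) = Some (\<lambda>_. [])" by (rule bch_syncw) (auto simp: bnd_def)
        have b2: "bch M W1 (syncw (take n ys)) = Some W1"
        proof (rule bch_syncw[OF bW1], intro ballI)
          fix z assume "z \<in> set (take n ys)"
          hence "src M z \<noteq> src M x" using sd by (meson in_set_takeD)
          thus "W1 (src M z, dst M z) = []" by (simp add: W1_def)
        qed
        have b3: "bch M W1 [Send y] = Some (W1((src M y, dst M y) := [y]))"
          using yx by (simp add: W1_def bnd_def)
        have b4: "bch M (\<lambda>_. []) [Send x] = Some W1"
          by (simp add: W1_def bnd_def)
        have bch: "bch M (\<lambda>_. []) \<rho> = Some (W1((src M y, dst M y) := [y]))"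
        proof -
          have e: "\<rho> = syncw t @ [Send x] @ syncw (take n ys) @ [Send y]" by (simp add: \<rho>_def)
          show ?thesis unfolding e by (simp only: bch_append b1 b2 b3 b4 option.simps)
        qed
        have vt: "V M S (t @ take (Suc n) ys)"
          using V_prefix[of M S "t @ take (Suc n) ys" "drop (Suc n) ys"] vy by simp
        have lpall: "\<forall>k. \<exists>s. lp (S k) (init (S k)) (prj M k \<rho>) s"
        proof
          fix k show "\<exists>s. lp (S k) (init (S k)) (prj M k \<rho>) s"
          proof (cases "k = src M x")
            case True
            have "prj M k \<rho> = prj M k (syncw (t @ x # take n ys))"
              using True yx xd by (simp add: \<rho>_def)
            moreover from ih have "Rs M S k (t @ x # take n ys) \<noteq> {}" by (simp add: V_def)
            ultimately show ?thesis by (auto simp: Rs_def)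
          next
            case False
            from vt have "Rs M S k (t @ take (Suc n) ys) \<noteq> {}" by (simp add: V_def)
            then obtain s where "lp (S k) (init (S k)) (prj M k (syncw (t @ take (Suc n) ys))) s"
              by (auto simp: Rs_def)
            moreover have "prj M k (syncw (t @ take (Suc n) ys)) = prj M k \<rho> @ prj M k [Recv y]"
              using False tk by (simp add: \<rho>_def)
            ultimately show ?thesis by (metis lp_prefix)
          qed
        qed
        show "V M S (t @ x # take (Suc n) ys)"
          using inl_tool[OF os bch lpall] sends by simp
      qed
    qed
  qed
  thus ?thesis by (metis order_refl take_all)
qed

lemma bch_empty_syncw: "bch M (\<lambda>_. []) (syncw p) = Some (\<lambda>_. [])"
  by (rule bch_syncw) (auto simp: bnd_def)

lemma seg1: "src M a \<noteq> src M b \<Longrightarrow> bch M (\<lambda>_. []) [Send b, Send a, Recv a, Recv b] = Some (\<lambda>_. [])"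
  by (simp add: bnd_def fun_eq_iff)

lemma seg2: "src M a \<noteq> src M b \<Longrightarrow> bch M (\<lambda>_. []) [Send b, Send a, Recv b, Recv a] = Some (\<lambda>_. [])"
  by (simp add: bnd_def fun_eq_iff)

lemma bch_seg: "bch M (\<lambda>_. []) sg = Some (\<lambda>_. []) \<Longrightarrow> bch M (\<lambda>_. []) (syncw p @ sg @ syncw q) = Some (\<lambda>_. [])"
  by (simp only: bch_append bch_empty_syncw option.simps)

lemma TP1:
  assumes os: "one_synchronizable M S"
    and vX: "V M S (p @ a # b # q)" and vY: "V M S (p @ b # a # q)"
    and ab: "src M a \<noteq> src M b" and i: "i \<noteq> dst M a \<or> i \<noteq> src M b"
  shows "Rs M S i (p @ a # b # q) \<subseteq> Rs M S i (p @ b # a # q)"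
proof (cases "src M b = dst M a")
  case False
  define \<rho> where "\<rho> = syncw p @ [Send b, Send a, Recv a, Recv b] @ syncw q"
  have pr: "\<And>k. prj M k \<rho> = prj M k (syncw (p @ a # b # q))"
    using False ab by (auto simp: \<rho>_def split: if_splits)
  have bch: "bch M (\<lambda>_. []) \<rho> = Some (\<lambda>_. [])"
    unfolding \<rho>_def by (rule bch_seg[OF seg1[OF ab]])
  have lpall: "\<forall>k. \<exists>s. lp (S k) (init (S k)) (prj M k \<rho>) s"
    using vX by (auto simp: V_def Rs_def pr)
  have sends: "sends \<rho> = p @ b # a # q" by (simp add: \<rho>_def)
  show ?thesis
  proof
    fix s assume "s \<in> Rs M S i (p @ a # b # q)"
    hence "lp (S i) (init (S i)) (prj M i \<rho>) s" by (simp add: Rs_def pr)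
    from inr_tool[OF os bch lpall this] show "s \<in> Rs M S i (p @ b # a # q)" by (simp add: sends)
  qed
next
  case True
  show ?thesis
  proof (cases "i = src M a \<and> i = dst M b")
    case True2: True
    define \<rho> where "\<rho> = syncw p @ [Send b, Send a, Recv b, Recv a] @ syncw q"
    have pr: "\<And>k. prj M k \<rho> = (if k = src M b then prj M k (syncw (p @ b # a # q))
        else prj M k (syncw (p @ a # b # q)))"
      using True True2 ab by (auto simp: \<rho>_def split: if_splits)
    have bch: "bch M (\<lambda>_. []) \<rho> = Some (\<lambda>_. [])"
      unfolding \<rho>_def by (rule bch_seg[OF seg2[OF ab]])
    have lpall: "\<forall>k. \<exists>s. lp (S k) (init (S k)) (prj M k \<rho>) s"
    proof
      fix k
      have x: "\<exists>s. lp (S k) (init (S k)) (prj M k (syncw (p @ a # b # q))) s"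
        using vX unfolding V_def Rs_def by blast
      have y: "\<exists>s. lp (S k) (init (S k)) (prj M k (syncw (p @ b # a # q))) s"
        using vY unfolding V_def Rs_def by blast
      show "\<exists>s. lp (S k) (init (S k)) (prj M k \<rho>) s"
        unfolding pr using x y by (cases "k = src M b") simp_all
    qed
    have sends: "sends \<rho> = p @ b # a # q" by (simp add: \<rho>_def)
    have pri: "prj M i \<rho> = prj M i (syncw (p @ a # b # q))" using pr True2 ab by simp
    show ?thesis
    proof
      fix s assume "s \<in> Rs M S i (p @ a # b # q)"
      hence "lp (S i) (init (S i)) (prj M i \<rho>) s" by (simp add: Rs_def pri)
      from inr_tool[OF os bch lpall this] show "s \<in> Rs M S i (p @ b # a # q)" by (simp add: sends)
    qed
  next
    case False
    have "prj M i (syncw (p @ a # b # q)) = prj M i (syncw (p @ b # a # q))"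
      using False True i by auto
    thus ?thesis by (simp add: Rs_def)
  qed
qed

lemma app_shuf: "xs @ ys \<in> shuffles xs ys"
  by (induction xs) (auto intro: Cons_in_shuffles_leftI)

lemma G_lemma:
  assumes os: "one_synchronizable M S"
  shows "V M S (t @ as) \<Longrightarrow> V M S (t @ bs) \<Longrightarrow> \<forall>a\<in>set as. \<forall>b\<in>set bs. src M a \<noteq> src M b
    \<Longrightarrow> \<forall>x\<in>set as \<union> set bs. src M x \<noteq> dst M x \<Longrightarrow> cs \<in> shuffles as bs \<Longrightarrow> V M S (t @ cs)"
proof (induction as bs arbitrary: t cs rule: shuffles.induct)
  case (1 ys) thus ?case by simp
next
  case (2 xs) thus ?case by simp
next
  case (3 x xs y ys)
  from "3.prems"(5) consider (l) cs' where "cs = x # cs'" "cs' \<in> shuffles xs (y # ys)"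
    | (r) cs' where "cs = y # cs'" "cs' \<in> shuffles (x # xs) ys" by auto
  thus ?case
  proof cases
    case l
    have vx: "V M S (t @ [x])" using "3.prems"(1) V_prefix[of M S "t @ [x]" xs] by simp
    have "V M S (t @ x # y # ys)"
      by (rule E_lemma[OF os vx "3.prems"(2)]) (use "3.prems" in auto)
    hence "V M S ((t @ [x]) @ cs')"
      using "3.IH"(1)[of "t @ [x]" cs'] "3.prems" l by auto
    thus ?thesis using l by simp
  next
    case r
    have vy: "V M S (t @ [y])" using "3.prems"(2) V_prefix[of M S "t @ [y]" ys] by simp
    have "V M S (t @ y # x # xs)"
      by (rule E_lemma[OF os vy "3.prems"(1)]) (use "3.prems" in auto)
    hence "V M S ((t @ [y]) @ cs')"
      using "3.IH"(2)[of "t @ [y]" cs'] "3.prems" r by auto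
    thus ?thesis using r by simp
  qed
qed

lemma MF_lemma:
  assumes os: "one_synchronizable M S"
  shows "(\<forall>c\<in>shuffles as1 (b # w). V M S (t @ c)) \<Longrightarrow> \<forall>a\<in>set as1. src M a \<noteq> src M b \<Longrightarrow>
    (i \<noteq> src M b \<longrightarrow> Rs M S i (t @ as1 @ b # w) \<subseteq> Rs M S i (t @ b # as1 @ w)) \<and>
    ((\<forall>a\<in>set as1. i \<noteq> src M a) \<longrightarrow> Rs M S i (t @ b # as1 @ w) \<subseteq> Rs M S i (t @ as1 @ b # w))"
proof (induction as1 arbitrary: t)
  case Nil thus ?case by simp
next
  case (Cons a as')
  have h1: "\<forall>c\<in>shuffles as' (b # w). V M S ((t @ [a]) @ c)"
    using Cons.prems(1) Cons_in_shuffles_leftI by fastforce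
  from Cons.IH[OF h1] Cons.prems(2) have ih:
    "(i \<noteq> src M b \<longrightarrow> Rs M S i (t @ a # as' @ b # w) \<subseteq> Rs M S i (t @ a # b # as' @ w)) \<and>
    ((\<forall>a\<in>set as'. i \<noteq> src M a) \<longrightarrow> Rs M S i (t @ a # b # as' @ w) \<subseteq> Rs M S i (t @ a # as' @ b # w))"
    by simp
  have vX: "V M S (t @ a # b # as' @ w)"
    using Cons.prems(1) Cons_in_shuffles_leftI[OF Cons_in_shuffles_rightI[OF app_shuf[of as' w]], of a b]
    by blast
  have vY: "V M S (t @ b # a # as' @ w)"
    using Cons.prems(1) Cons_in_shuffles_rightI[OF Cons_in_shuffles_leftI[OF app_shuf[of as' w]], of b a]
    by blast
  have ab: "src M a \<noteq> src M b" using Cons.prems(2) by simp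
  show ?case
  proof (intro conjI impI)
    assume ib: "i \<noteq> src M b"
    have "Rs M S i (t @ a # b # as' @ w) \<subseteq> Rs M S i (t @ b # a # as' @ w)"
      by (rule TP1[OF os vX vY ab]) (use ib in simp)
    with ih ib show "Rs M S i (t @ (a # as') @ b # w) \<subseteq> Rs M S i (t @ b # (a # as') @ w)" by auto
  next
    assume ia: "\<forall>a'\<in>set (a # as'). i \<noteq> src M a'"
    have "Rs M S i (t @ b # a # as' @ w) \<subseteq> Rs M S i (t @ a # b # as' @ w)"
      by (rule TP1[OF os vY vX]) (use ab ia in auto)
    with ih ia show "Rs M S i (t @ b # (a # as') @ w) \<subseteq> Rs M S i (t @ (a # as') @ b # w)" by auto
  qed
qed

lemma MC_lemma:
  assumes os: "one_synchronizable M S"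
  shows "V M S (t @ as) \<Longrightarrow> V M S (t @ bs) \<Longrightarrow> \<forall>a\<in>set as. \<forall>b\<in>set bs. src M a \<noteq> src M b
    \<Longrightarrow> \<forall>x\<in>set as \<union> set bs. src M x \<noteq> dst M x \<Longrightarrow> cs \<in> shuffles as bs \<Longrightarrow>
    (i \<notin> src M ` set bs \<longrightarrow> Rs M S i (t @ as @ bs) \<subseteq> Rs M S i (t @ cs)) \<and>
    (i \<notin> src M ` set as \<longrightarrow> Rs M S i (t @ cs) \<subseteq> Rs M S i (t @ as @ bs))"
proof (induction as bs arbitrary: t cs rule: shuffles.induct)
  case (1 ys) thus ?case by simp
next
  case (2 xs) thus ?case by simp
next
  case (3 x xs y ys)
  from "3.prems"(5) consider (l) cs' where "cs = x # cs'" "cs' \<in> shuffles xs (y # ys)"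
    | (r) cs' where "cs = y # cs'" "cs' \<in> shuffles (x # xs) ys" by auto
  thus ?case
  proof cases
    case l
    have vx: "V M S (t @ [x])" using "3.prems"(1) V_prefix[of M S "t @ [x]" xs] by simp
    have "V M S (t @ x # y # ys)"
      by (rule E_lemma[OF os vx "3.prems"(2)]) (use "3.prems" in auto)
    hence "(i \<notin> src M ` set (y # ys) \<longrightarrow> Rs M S i ((t @ [x]) @ xs @ y # ys) \<subseteq> Rs M S i ((t @ [x]) @ cs')) \<and>
    (i \<notin> src M ` set xs \<longrightarrow> Rs M S i ((t @ [x]) @ cs') \<subseteq> Rs M S i ((t @ [x]) @ xs @ y # ys))"
      using "3.IH"(1)[of "t @ [x]" cs'] "3.prems" l by auto
    thus ?thesis using l by auto
  next
    case r
    have vy: "V M S (t @ [y])" using "3.prems"(2) V_prefix[of M S "t @ [y]" ys] by simp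
    have "V M S (t @ y # x # xs)"
      by (rule E_lemma[OF os vy "3.prems"(1)]) (use "3.prems" in auto)
    hence ih: "(i \<notin> src M ` set ys \<longrightarrow> Rs M S i ((t @ [y]) @ (x # xs) @ ys) \<subseteq> Rs M S i ((t @ [y]) @ cs')) \<and>
    (i \<notin> src M ` set (x # xs) \<longrightarrow> Rs M S i ((t @ [y]) @ cs') \<subseteq> Rs M S i ((t @ [y]) @ (x # xs) @ ys))"
      using "3.IH"(2)[of "t @ [y]" cs'] "3.prems" r by auto
    have allv: "\<forall>c\<in>shuffles (x # xs) (y # ys). V M S (t @ c)"
      using G_lemma[OF os "3.prems"(1-4)] by blast
    have mf: "(i \<noteq> src M y \<longrightarrow> Rs M S i (t @ (x # xs) @ y # ys) \<subseteq> Rs M S i (t @ y # (x # xs) @ ys)) \<and>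
      ((\<forall>a\<in>set (x # xs). i \<noteq> src M a) \<longrightarrow> Rs M S i (t @ y # (x # xs) @ ys) \<subseteq> Rs M S i (t @ (x # xs) @ y # ys))"
      by (rule MF_lemma[OF os allv]) (use "3.prems"(3) in auto)
    show ?thesis using ih mf r by auto
  qed
qed

theorem lemma4p6:
  fixes M :: "'m msgset" and S :: "('m, 's) system"
    and \<tau> :: "'m action list" and as bs cs :: "'m list"
  assumes "wf_msgset M" and "wf_system M S"
    and "one_synchronizable M S"
    and "set as \<subseteq> msgs M" and "set bs \<subseteq> msgs M"
    and "\<tau> \<in> T M S 0"
    and "\<tau> @ syncw as \<in> T M S 0"
    and "\<tau> @ syncw bs \<in> T M S 0"
    and "\<forall>a\<in>set as. \<forall>b\<in>set bs. src M a \<noteq> src M b"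
    and "cs \<in> shuffles as bs"
  shows "\<tau> @ syncw cs \<in> T M S 0 \<and> sequiv M S (\<tau> @ syncw as @ syncw bs) (\<tau> @ syncw cs)"
proof -
  note os = assms(3)
  define t where "t = sends \<tau>"
  have tau: "\<tau> = syncw t" using T0_form[OF assms(6)] by (simp add: t_def)
  have vA: "V M S (t @ as)" using assms(7) by (simp add: tau T0_syncw[symmetric])
  have vB: "V M S (t @ bs)" using assms(8) by (simp add: tau T0_syncw[symmetric])
  have sd: "\<forall>x\<in>set as \<union> set bs. src M x \<noteq> dst M x"
    using assms(1,4,5) by (auto simp: wf_msgset_def)
  note dis = assms(9)
  have vC: "V M S (t @ cs)" by (rule G_lemma[OF os vA vB dis sd assms(10)])
  have vAB: "V M S (t @ as @ bs)" by (rule G_lemma[OF os vA vB dis sd app_shuf])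
  have ex: "\<forall>k. \<exists>s. s \<in> Rs M S k (t @ as @ bs) \<and> s \<in> Rs M S k (t @ cs)"
  proof
    fix k
    note mc = MC_lemma[OF os vA vB dis sd assms(10), of k]
    show "\<exists>s. s \<in> Rs M S k (t @ as @ bs) \<and> s \<in> Rs M S k (t @ cs)"
    proof (cases "k \<in> src M ` set bs")
      case True
      hence "k \<notin> src M ` set as" using dis by force
      with mc have sub: "Rs M S k (t @ cs) \<subseteq> Rs M S k (t @ as @ bs)" by blast
      from vC obtain s where "s \<in> Rs M S k (t @ cs)" unfolding V_def by blast
      with sub show ?thesis by blast
    next
      case False
      with mc have sub: "Rs M S k (t @ as @ bs) \<subseteq> Rs M S k (t @ cs)" by blast
      from vAB obtain s where "s \<in> Rs M S k (t @ as @ bs)" unfolding V_def by blast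
      with sub show ?thesis by blast
    qed
  qed
  define q where "q = (\<lambda>k. SOME s. s \<in> Rs M S k (t @ as @ bs) \<and> s \<in> Rs M S k (t @ cs))"
  have q: "\<forall>k. q k \<in> Rs M S k (t @ as @ bs) \<and> q k \<in> Rs M S k (t @ cs)"
  proof
    fix k
    from ex obtain s where "s \<in> Rs M S k (t @ as @ bs) \<and> s \<in> Rs M S k (t @ cs)" by blast
    thus "q k \<in> Rs M S k (t @ as @ bs) \<and> q k \<in> Rs M S k (t @ cs)" unfolding q_def by (rule someI)
  qed
  have r1: "run M S (c0 S) (syncw (t @ as @ bs)) (q, (\<lambda>_. []))"
    unfolding reach_syncw using q by simp
  have r2: "run M S (c0 S) (syncw (t @ cs)) (q, (\<lambda>_. []))"
    unfolding reach_syncw using q by simp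
  have t1: "\<tau> @ syncw as @ syncw bs \<in> T M S 0" using vAB by (simp add: tau T0_syncw[symmetric])
  have t2: "\<tau> @ syncw cs \<in> T M S 0" using vC by (simp add: tau T0_syncw[symmetric])
  have "sequiv M S (\<tau> @ syncw as @ syncw bs) (\<tau> @ syncw cs)"
    unfolding sequiv_def Tomega_def using t1 t2 r1 r2 by (auto simp: tau)
  with t2 show ?thesis by blast
qed

end
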